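(* Let $\mathbb H$ be the real quaternion algebra. Let $a,d\in\mathbb H$ be nonzero with $\Re(a)=0$ and $ad=-da$, let $m,n\in\mathbb R$, and let $f(z)=z^2+az+m+na+d$. Let $z_0$ be a root of $f$ (i.e. $z_0^2+az_0+m+na+d=0$), and let $r_0=\Re(z_0)$, $N_0=-\Im(z_0)^2$. If $n\neq0$, then $r_0$ is a root of $16r^6+(-8a^2+16m)r^4+(-a^2(4m-a^2)+4a^2n^2+4d^2)r^2-a^4n^2=0$ and $\Im(z_0)=-(2r_0+a)^{-1}\left(\frac{1}{2r_0}a(r_0+n)(2r_0+a)+d\right)$. If $n=0$, then either $r_0=0$, $N_0$ is a root of $N^2+(a^2-2m)N+m^2-d^2=0$ and $\Im(z_0)=-a^{-1}(m+d-N_0)$; or $r_0$ is a root of $16r^4+(-8a^2+16m)r^2-a^2(4m-a^2)+4d^2=0$ and $\Im(z_0)=-(2r_0+a)^{-1}\left(\frac12a(2r_0+a)+d\right)$.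
   Context: For $q=c_1+c_2i+c_3j+c_4k\in\mathbb H$, $\Re(q)=c_1$ and $\Im(q)=q-\Re(q)$. Under the hypotheses $a$ and $d$ are pure imaginary, so $a^2,d^2\in\mathbb R$. *)

theory Defs
  imports Complex_Main
begin

datatype quat = Quat (Re: real) (Im1: real) (Im2: real) (Im3: real)

lemma quat_eqI [intro?]:
  "Re x = Re y \<Longrightarrow> Im1 x = Im1 y \<Longrightarrow> Im2 x = Im2 y \<Longrightarrow> Im3 x = Im3 y \<Longrightarrow> x = y"
  by (cases x; cases y) simp

lemma quat_eq_iff: "x = y \<longleftrightarrow> Re x = Re y \<and> Im1 x = Im1 y \<and> Im2 x = Im2 y \<and> Im3 x = Im3 y"
  by (auto intro: quat_eqI)

instantiation quat :: real_vector
begin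
definition "0 = Quat 0 0 0 0"
definition "x + y = Quat (Re x + Re y) (Im1 x + Im1 y) (Im2 x + Im2 y) (Im3 x + Im3 y)"
definition "- x = Quat (- Re x) (- Im1 x) (- Im2 x) (- Im3 x)"
definition "x - y = Quat (Re x - Re y) (Im1 x - Im1 y) (Im2 x - Im2 y) (Im3 x - Im3 y)"
definition "scaleR r x = Quat (r * Re x) (r * Im1 x) (r * Im2 x) (r * Im3 x)"
instance
  by standard (auto simp: quat_eq_iff zero_quat_def plus_quat_def uminus_quat_def
      minus_quat_def scaleR_quat_def algebra_simps)
end

instantiation quat :: real_algebra_1
begin
definition "1 = Quat 1 0 0 0"
definition "x * y = Quat
  (Re x * Re y - Im1 x * Im1 y - Im2 x * Im2 y - Im3 x * Im3 y)
  (Re x * Im1 y + Im1 x * Re y + Im2 x * Im3 y - Im3 x * Im2 y)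
  (Re x * Im2 y - Im1 x * Im3 y + Im2 x * Re y + Im3 x * Im1 y)
  (Re x * Im3 y + Im1 x * Im2 y - Im2 x * Im1 y + Im3 x * Re y)"
instance
  by standard (auto simp: quat_eq_iff zero_quat_def plus_quat_def one_quat_def
      times_quat_def scaleR_quat_def algebra_simps)
end

definition qnorm2 :: "quat \<Rightarrow> real" where
  "qnorm2 x = (Re x)^2 + (Im1 x)^2 + (Im2 x)^2 + (Im3 x)^2"

definition qcnj :: "quat \<Rightarrow> quat" where
  "qcnj x = Quat (Re x) (- Im1 x) (- Im2 x) (- Im3 x)"

lemma quat_sq_pos: "x \<noteq> 0 \<Longrightarrow> qnorm2 x > 0"
proof -
  assume "x \<noteq> 0"
  then have "Re x \<noteq> 0 \<or> Im1 x \<noteq> 0 \<or> Im2 x \<noteq> 0 \<or> Im3 x \<noteq> 0"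
    by (auto simp: quat_eq_iff zero_quat_def)
  then show ?thesis unfolding qnorm2_def
    by (smt (verit) zero_less_power2 zero_le_power2)
qed

lemma qcnj_mult1: "qcnj x * x = Quat (qnorm2 x) 0 0 0"
  by (simp add: quat_eq_iff qcnj_def times_quat_def qnorm2_def power2_eq_square algebra_simps)

lemma qcnj_mult2: "x * qcnj x = Quat (qnorm2 x) 0 0 0"
  by (simp add: quat_eq_iff qcnj_def times_quat_def qnorm2_def power2_eq_square algebra_simps)

instantiation quat :: division_ring
begin
definition "inverse x = scaleR (1 / qnorm2 x) (qcnj x)"
definition divide_quat_def: "divide x (y :: quat) = x * inverse y"
lemma quat_inverse_left: "(a::quat) \<noteq> 0 \<Longrightarrow> inverse a * a = 1"
proof -
  assume "a \<noteq> 0"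
  then have s: "qnorm2 a \<noteq> 0"
    using quat_sq_pos by force
  show ?thesis
    using s unfolding inverse_quat_def mult_scaleR_left qcnj_mult1 by (simp add: scaleR_quat_def one_quat_def)
qed
lemma quat_inverse_right: "(a::quat) \<noteq> 0 \<Longrightarrow> a * inverse a = 1"
proof -
  assume "a \<noteq> 0"
  then have s: "qnorm2 a \<noteq> 0"
    using quat_sq_pos by force
  show ?thesis
    using s unfolding inverse_quat_def mult_scaleR_right qcnj_mult2 by (simp add: scaleR_quat_def one_quat_def)
qed
instance
  by standard (simp_all add: quat_inverse_left quat_inverse_right divide_quat_def,
     simp add: inverse_quat_def zero_quat_def scaleR_quat_def qcnj_def)
end

definition Imq :: "quat \<Rightarrow> quat" where
  "Imq q = q - of_real (Re q)"

end

theory Submission imports Defs begin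
lemma of_real_quat: "(of_real x :: quat) = Quat x 0 0 0"
  by (simp add: of_real_def scaleR_quat_def one_quat_def)
lemma numeral_quat: "(numeral k :: quat) = Quat (numeral k) 0 0 0"
proof -
  have "(numeral k :: quat) = of_real (numeral k)" by simp
  then show ?thesis by (simp only: of_real_quat)
qed
lemma half_quat: "(1/2 :: quat) = Quat (1/2) 0 0 0"
  by (simp add: divide_quat_def inverse_quat_def numeral_quat qnorm2_def qcnj_def scaleR_quat_def one_quat_def times_quat_def)
lemma of_real_pow_quat: "(of_real x :: quat)^k = Quat (x^k) 0 0 0"
proof -
  have "(of_real x :: quat)^k = of_real (x^k)" by simp
  then show ?thesis by (simp only: of_real_quat)
qed
lemma mult_Quat: "Quat a b c d * Quat e f g h = Quat (a*e - b*f - c*g - d*h) (a*f + b*e + c*h - d*g) (a*g - b*h + c*e + d*f) (a*h + b*g - c*f + d*e)"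
  by (simp add: times_quat_def)
lemma add_Quat: "Quat a b c d + Quat e f g h = Quat (a+e) (b+f) (c+g) (d+h)"
  by (simp add: plus_quat_def)
lemma diff_Quat: "Quat a b c d - Quat e f g h = Quat (a-e) (b-f) (c-g) (d-h)"
  by (simp add: minus_quat_def)
lemma neg_Quat: "- Quat a b c d = Quat (-a) (-b) (-c) (-d)"
  by (simp add: uminus_quat_def)
lemma one_Quat: "(1::quat) = Quat 1 0 0 0" by (simp add: one_quat_def)
lemma zero_Quat: "(0::quat) = Quat 0 0 0 0" by (simp add: zero_quat_def)
lemma sq_pure: "(Quat 0 x y z)^2 = Quat (-(x^2+y^2+z^2)) 0 0 0"
  by (simp add: power2_eq_square mult_Quat)
lemma inv_solve: "(X::quat) \<noteq> 0 \<Longrightarrow> X * v = - Y \<Longrightarrow> v = - inverse X * Y"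
proof -
  assume X: "X \<noteq> 0" and h: "X * v = - Y"
  have "v = (inverse X * X) * v" using X by simp
  also have "\<dots> = inverse X * (X * v)" by (simp only: mult.assoc)
  also have "\<dots> = - inverse X * Y" using h by simp
  finally show ?thesis .
qed

theorem mainTheorem18:
  fixes a d z0 :: quat and m n :: real
  assumes a_nz: "a \<noteq> 0" and d_nz: "d \<noteq> 0"
    and a_pure: "Re a = 0"
    and anti: "a * d = - (d * a)"
    and root: "z0^2 + a * z0 + of_real m + of_real n * a + d = 0"
  shows "(n \<noteq> 0 \<longrightarrow>
       (16 * (of_real (Re z0))^6 + (- 8 * a^2 + 16 * of_real m) * (of_real (Re z0))^4
        + (- (a^2) * (4 * of_real m - a^2) + 4 * a^2 * (of_real n)^2 + 4 * d^2) * (of_real (Re z0))^2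
        - a^4 * (of_real n)^2 = 0)
     \<and> Imq z0 = - inverse (2 * of_real (Re z0) + a) *
          (of_real (1 / (2 * Re z0)) * a * (of_real (Re z0) + of_real n) * (2 * of_real (Re z0) + a) + d))
  \<and> (n = 0 \<longrightarrow>
       (Re z0 = 0
        \<and> (- ((Imq z0)^2))^2 + (a^2 - 2 * of_real m) * (- ((Imq z0)^2)) + (of_real m)^2 - d^2 = 0
        \<and> Imq z0 = - inverse a * (of_real m + d - (- ((Imq z0)^2))))
     \<or> (16 * (of_real (Re z0))^4 + (- 8 * a^2 + 16 * of_real m) * (of_real (Re z0))^2
          - a^2 * (4 * of_real m - a^2) + 4 * d^2 = 0
        \<and> Imq z0 = - inverse (2 * of_real (Re z0) + a) * ((1/2) * a * (2 * of_real (Re z0) + a) + d)))"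
proof -
  obtain a1 a2 a3 where ha: "a = Quat 0 a1 a2 a3" using a_pure by (cases a) auto
  obtain d0 d1 d2 d3 where hd: "d = Quat d0 d1 d2 d3" by (cases d) auto
  obtain r v1 v2 v3 where hz: "z0 = Quat r v1 v2 v3" by (cases z0) auto
  note S = of_real_quat numeral_quat mult_Quat add_Quat diff_Quat neg_Quat one_Quat zero_Quat
  have anz: "a1 \<noteq> 0 \<or> a2 \<noteq> 0 \<or> a3 \<noteq> 0" using a_nz ha by (auto simp: zero_Quat)
  have an: "a1*a1+a2*a2+a3*a3 > 0" using anz by (smt (verit) not_real_square_gt_zero zero_le_square)
  have AE: "d0*a1 = 0" "d0*a2 = 0" "d0*a3 = 0" "a1*d1+a2*d2+a3*d3 = 0"
    using anti unfolding ha hd by (simp_all add: S algebra_simps)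
  have d0: "d0 = 0" using AE anz by auto
  have ad: "a1*d1+a2*d2+a3*d3 = 0" by fact
  have R: "r*r - (v1*v1+v2*v2+v3*v3) - (a1*v1+a2*v2+a3*v3) + m = 0"
     "2*r*v1 + a1*r + a2*v3 - a3*v2 + n*a1 + d1 = 0"
     "2*r*v2 + a2*r - a1*v3 + a3*v1 + n*a2 + d2 = 0"
     "2*r*v3 + a3*r + a1*v2 - a2*v1 + n*a3 + d3 = 0"
  proof -
    have "Quat (r*r - (v1*v1+v2*v2+v3*v3) - (a1*v1+a2*v2+a3*v3) + m)
       (2*r*v1 + a1*r + a2*v3 - a3*v2 + n*a1 + d1)
       (2*r*v2 + a2*r - a1*v3 + a3*v1 + n*a2 + d2)
       (2*r*v3 + a3*r + a1*v2 - a2*v1 + n*a3 + d3) = z0^2 + a * z0 + of_real m + of_real n * a + d"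
      unfolding ha hd hz d0 power2_eq_square S by (simp add: algebra_simps)
    then show "r*r - (v1*v1+v2*v2+v3*v3) - (a1*v1+a2*v2+a3*v3) + m = 0"
     "2*r*v1 + a1*r + a2*v3 - a3*v2 + n*a1 + d1 = 0"
     "2*r*v2 + a2*r - a1*v3 + a3*v1 + n*a2 + d2 = 0"
     "2*r*v3 + a3*r + a1*v2 - a2*v1 + n*a3 + d3 = 0" using root by (simp_all add: zero_Quat)
  qed
  define A where "A = a1*a1+a2*a2+a3*a3"
  define P where "P = a1*v1+a2*v2+a3*v3"
  define N where "N = v1*v1+v2*v2+v3*v3"
  define D where "D = d1*d1+d2*d2+d3*d3"
  have E1: "2*r*P + (r+n)*A = 0" unfolding A_def P_def using R ad by algebra
  have E2: "2*r*N + (r+n)*P + (v1*d1+v2*d2+v3*d3) = 0" unfolding N_def P_def using R ad by algebra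
  have E3: "2*r*(v1*d1+v2*d2+v3*d3) + (d1*(a2*v3-a3*v2)+d2*(a3*v1-a1*v3)+d3*(a1*v2-a2*v1)) + D = 0" unfolding D_def using R ad by algebra
  have E4: "A*N - P*P + (d1*(a2*v3-a3*v2)+d2*(a3*v1-a1*v3)+d3*(a1*v2-a2*v1)) = 0" unfolding A_def N_def P_def using R ad by algebra
  have E5: "N = r*r + m - P" using R(1) unfolding N_def P_def by linarith
  have E7: "(4*r*r+A)*(r*r+m-P) + 2*r*(r+n)*P - P*P - D = 0"
    using E2 E3 E4 E5 by algebra
  have T6: "16*r^6 + (8*A+16*m)*r^4 + (4*m*A + A*A - 4*A*n*n - 4*D)*r^2 - A*A*n*n = 0"
    using E1 E7 by algebra
  have hr: "Re z0 = r" using hz by simp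
  have hv: "Imq z0 = Quat 0 v1 v2 v3" unfolding Imq_def hz by (simp add: S)
  have a2: "a^2 = Quat (-A) 0 0 0" unfolding ha A_def sq_pure by (simp add: power2_eq_square)
  have a4: "a^4 = Quat (A*A) 0 0 0" proof -
    have "a^4 = a^2*a^2" by (simp add: power_add[symmetric])
    then show ?thesis unfolding a2 by (simp add: S)
  qed
  have d2: "d^2 = Quat (-D) 0 0 0" unfolding hd d0 D_def sq_pure by (simp add: power2_eq_square)
  have v2: "(Imq z0)^2 = Quat (-N) 0 0 0" unfolding hv N_def sq_pure by (simp add: power2_eq_square)
  have Xnz: "2 * of_real r + a \<noteq> 0" using anz unfolding ha by (simp add: S)
  have part1: "16 * (of_real (Re z0))^6 + (- 8 * a^2 + 16 * of_real m) * (of_real (Re z0))^4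
        + (- (a^2) * (4 * of_real m - a^2) + 4 * a^2 * (of_real n)^2 + 4 * d^2) * (of_real (Re z0))^2
        - a^4 * (of_real n)^2 = (0::quat)"
    unfolding hr a2 a4 d2 of_real_pow_quat apply (simp only: S quat.inject) apply (intro conjI) apply (algebra | use T6 in algebra)+ done
  have Apos: "A > 0" unfolding A_def using an by simp
  have part2: "Imq z0 = - inverse (2 * of_real (Re z0) + a) *
          (of_real (1 / (2 * Re z0)) * a * (of_real (Re z0) + of_real n) * (2 * of_real (Re z0) + a) + d)"
    if nn: "n \<noteq> 0"
  proof -
    have rnz: "r \<noteq> 0" using E1 nn Apos by auto
    define q where "q = 1/(2*r)"
    have q: "q * (2*r) = 1" using rnz unfolding q_def by simp
    show ?thesis unfolding hr
    proof (rule inv_solve[OF Xnz])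
      show "(2 * of_real r + a) * Imq z0 = - (of_real (1 / (2 * r)) * a * (of_real r + of_real n) * (2 * of_real r + a) + d)"
        unfolding hv ha hd d0 q_def[symmetric]
        apply (simp only: S quat.inject) apply (intro conjI) apply (algebra | use R E1 q A_def P_def in algebra)+ done
    qed
  qed
  have part3: "(Re z0 = 0
        \<and> (- ((Imq z0)^2))^2 + (a^2 - 2 * of_real m) * (- ((Imq z0)^2)) + (of_real m)^2 - d^2 = 0
        \<and> Imq z0 = - inverse a * (of_real m + d - (- ((Imq z0)^2))))
     \<or> (16 * (of_real (Re z0))^4 + (- 8 * a^2 + 16 * of_real m) * (of_real (Re z0))^2
          - a^2 * (4 * of_real m - a^2) + 4 * d^2 = 0
        \<and> Imq z0 = - inverse (2 * of_real (Re z0) + a) * ((1/2) * a * (2 * of_real (Re z0) + a) + d))"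
    if nn: "n = 0"
  proof (cases "r = 0")
    case True
    have Q: "N*N - (2*m+A)*N + m*m + D = 0"
      using E3 E4 E5 True by algebra
    have I: "Imq z0 = - inverse a * (of_real m + d - (- ((Imq z0)^2)))"
    proof (rule inv_solve[OF a_nz])
      show "a * Imq z0 = - (of_real m + d - (- ((Imq z0)^2)))"
        unfolding v2 unfolding hv ha hd d0 apply (simp only: S quat.inject) apply (intro conjI) apply (algebra | use R True nn N_def in algebra)+ done
    qed
    have "(- ((Imq z0)^2))^2 + (a^2 - 2 * of_real m) * (- ((Imq z0)^2)) + (of_real m)^2 - d^2 = 0"
      unfolding v2 a2 d2 of_real_pow_quat apply (simp only: S quat.inject power2_eq_square) apply (intro conjI) apply (algebra | use Q in algebra)+ done
    then show ?thesis using I True hr by simp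
  next
    case False
    have T4: "16*r^4 + (8*A+16*m)*r^2 + (4*m*A + A*A - 4*D) = 0"
    proof -
      have "r^2 * (16*r^4 + (8*A+16*m)*r^2 + (4*m*A + A*A - 4*D)) = 0"
        using T6 nn by (simp add: algebra_simps power_numeral_reduce eval_nat_numeral)
      then show ?thesis using False by simp
    qed
    have "r*(2*P+A) = 0" using E1 nn by (simp add: algebra_simps)
    then have "2*P+A = 0" using False by simp
    then have Pv: "P = -A/2" by simp
    have I: "Imq z0 = - inverse (2 * of_real (Re z0) + a) * ((1/2) * a * (2 * of_real (Re z0) + a) + d)"
      unfolding hr
    proof (rule inv_solve[OF Xnz])
      show "(2 * of_real r + a) * Imq z0 = - ((1/2) * a * (2 * of_real r + a) + d)"
        unfolding hv ha hd d0 half_quat apply (simp only: S quat.inject) apply (intro conjI) apply (algebra | use R Pv nn A_def P_def in algebra)+ done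
    qed
    have "16 * (of_real (Re z0))^4 + (- 8 * a^2 + 16 * of_real m) * (of_real (Re z0))^2
          - a^2 * (4 * of_real m - a^2) + 4 * d^2 = (0::quat)"
      unfolding hr a2 d2 of_real_pow_quat apply (simp only: S quat.inject) apply (intro conjI) apply (algebra | use T4 in algebra)+ done
    then show ?thesis using I by simp
  qed
  show ?thesis using part1 part2 part3 by blast
qed
end
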